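(* Let $A$ be a unital algebra over $\mathbb{F}_2$ and let $\Omega^1$ extend to an exterior algebra $\Omega$ over $A$ at least up to degree 2 (product $\wedge$, differential ${\rm d}$ with ${\rm d}^2=0$ and graded Leibniz rule, generated by $A$ and ${\rm d} A$), and let $\theta\in\Omega^1$ satisfy ${\rm d}\theta=0$. Let $\bar A$ and $\bar\Omega^1$ be as follows: $\bar A$ is the set $A$ with $a\,\bar\cdot\,b=ab+a+b$, $a\,\bar+\,b=a+b+1$; $\bar\Omega^1$ is the set $\Omega^1$ with $\omega\,\bar+\,\eta=\theta+\omega+\eta$, $a\,\bar\cdot\,\omega=a\theta+(a+1)\omega$, $\omega\,\bar\cdot\,a=\theta a+\omega(a+1)$ and $\bar{\rm d} a=\theta+{\rm d} a$. (i) Let $\bar\Omega^2$ be the set $\Omega^2$ with $\omega\,\bar+\,\eta=\theta^2+\omega+\eta$, $a\,\bar\cdot\,\omega=a\theta^2+(a+1)\omega$, $\omega\,\bar\cdot\,a=\theta^2a+\omega(a+1)$ for $\omega,\eta\in\Omega^2$, $a\in A$, with product $\bar\Omega^1\times\bar\Omega^1\to\bar\Omega^2$ given by $\omega\,\bar\wedge\,\eta=\omega\wedge\eta+\theta\wedge\eta+\omega\wedge\theta$, and with $\bar{\rm d}\omega=\theta^2+{\rm d}\omega$ for $\omega\in\bar\Omega^1$ (where $\theta^2=\theta\wedge\theta$). Then $\bar A,\bar\Omega^1,\bar\Omega^2$ with these structures form the part up to degree 2 of an exterior algebra over $\bar A$. (ii) The map $\bar{\ }:\Omega^2\to\bar\Omega^2$,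 $\bar\omega=\theta^2+\omega$, together with $a\mapsto 1+a$ on $A$ and $\omega\mapsto\theta+\omega$ on $\Omega^1$, is a map of differential graded algebras up to degree 2.
   Context: Over $\mathbb{F}_2$ all signs in the graded Leibniz rule are irrelevant. A map of differential graded algebras up to degree 2 here means maps in degrees 0,1,2 that are additive, intertwine the products (including $\overline{\omega\wedge\eta}=\bar\omega\,\bar\wedge\,\bar\eta$ and the bimodule actions) and intertwine the differentials ($\overline{{\rm d} a}=\bar{\rm d}\bar a$, $\overline{{\rm d}\omega}=\bar{\rm d}\bar\omega$). *)

theory Defs
  imports Main
begin

text \<open>A differential graded algebra over F_2 truncated at degree 2, generated by
 degree 0 and its differentials ("exterior algebra up to degree 2").
 'a = degree 0 (the algebra A), 'b = degree 1, 'c = degree 2.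
 All structure is given explicitly so that the same carrier types can carry the
 deformed (barred) operations.\<close>

record ('a, 'b, 'c) ext2 =
  addA  :: "'a \<Rightarrow> 'a \<Rightarrow> 'a"
  mulA  :: "'a \<Rightarrow> 'a \<Rightarrow> 'a"
  zeroA :: 'a
  oneA  :: 'a
  add1  :: "'b \<Rightarrow> 'b \<Rightarrow> 'b"
  zero1 :: 'b
  lmul1 :: "'a \<Rightarrow> 'b \<Rightarrow> 'b"
  rmul1 :: "'b \<Rightarrow> 'a \<Rightarrow> 'b"
  add2  :: "'c \<Rightarrow> 'c \<Rightarrow> 'c"
  zero2 :: 'c
  lmul2 :: "'a \<Rightarrow> 'c \<Rightarrow> 'c"
  rmul2 :: "'c \<Rightarrow> 'a \<Rightarrow> 'c"
  wedge :: "'b \<Rightarrow> 'b \<Rightarrow> 'c"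
  d0    :: "'a \<Rightarrow> 'b"
  d1    :: "'b \<Rightarrow> 'c"

text \<open>An abelian group in which x + x = 0, i.e. an F_2-vector space.\<close>
definition f2_space :: "('x \<Rightarrow> 'x \<Rightarrow> 'x) \<Rightarrow> 'x \<Rightarrow> bool" where
  "f2_space add z \<longleftrightarrow>
     (\<forall>x y w. add (add x y) w = add x (add y w)) \<and>
     (\<forall>x y. add x y = add y x) \<and>
     (\<forall>x. add x z = x) \<and>
     (\<forall>x. add x x = z)"

definition bimod ::
  "('a \<Rightarrow> 'a \<Rightarrow> 'a) \<Rightarrow> ('a \<Rightarrow> 'a \<Rightarrow> 'a) \<Rightarrow> 'a \<Rightarrow>
   ('x \<Rightarrow> 'x \<Rightarrow> 'x) \<Rightarrow> ('a \<Rightarrow> 'x \<Rightarrow> 'x) \<Rightarrow> ('x \<Rightarrow> 'a \<Rightarrow> 'x) \<Rightarrow> bool" where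
  "bimod ad mu one add l r \<longleftrightarrow>
     (\<forall>a x y. l a (add x y) = add (l a x) (l a y)) \<and>
     (\<forall>a b x. l (ad a b) x = add (l a x) (l b x)) \<and>
     (\<forall>a b x. l (mu a b) x = l a (l b x)) \<and>
     (\<forall>x. l one x = x) \<and>
     (\<forall>a x y. r (add x y) a = add (r x a) (r y a)) \<and>
     (\<forall>a b x. r x (ad a b) = add (r x a) (r x b)) \<and>
     (\<forall>a b x. r x (mu a b) = r (r x a) b) \<and>
     (\<forall>x. r x one = x) \<and>
     (\<forall>a b x. l a (r x b) = r (l a x) b)"

definition gen1 :: "('a, 'b, 'c, 'z) ext2_scheme \<Rightarrow> 'b \<Rightarrow> bool" where
  "gen1 E w \<longleftrightarrow> (\<exists>xs. w = foldr (\<lambda>(a, b) acc. add1 E (lmul1 E a (d0 E b)) acc) xs (zero1 E))"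

definition gen2 :: "('a, 'b, 'c, 'z) ext2_scheme \<Rightarrow> 'c \<Rightarrow> bool" where
  "gen2 E w \<longleftrightarrow> (\<exists>xs. w = foldr (\<lambda>(a, b, c) acc.
       add2 E (lmul2 E a (wedge E (d0 E b) (d0 E c))) acc) xs (zero2 E))"

text \<open>Exterior algebra over the unital F_2-algebra (addA, mulA, zeroA, oneA), up to degree 2.
 Over F_2 all signs of the graded Leibniz rule are irrelevant.\<close>
definition ext_alg2 :: "('a, 'b, 'c, 'z) ext2_scheme \<Rightarrow> bool" where
  "ext_alg2 E \<longleftrightarrow>
     \<comment> \<open>unital associative algebra over F_2\<close>
     f2_space (addA E) (zeroA E) \<and>
     (\<forall>a b c. mulA E (mulA E a b) c = mulA E a (mulA E b c)) \<and>
     (\<forall>a. mulA E (oneA E) a = a) \<and> (\<forall>a. mulA E a (oneA E) = a) \<and>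
     (\<forall>a b c. mulA E a (addA E b c) = addA E (mulA E a b) (mulA E a c)) \<and>
     (\<forall>a b c. mulA E (addA E a b) c = addA E (mulA E a c) (mulA E b c)) \<and>
     \<comment> \<open>degree 1 and 2 bimodules\<close>
     f2_space (add1 E) (zero1 E) \<and>
     bimod (addA E) (mulA E) (oneA E) (add1 E) (lmul1 E) (rmul1 E) \<and>
     f2_space (add2 E) (zero2 E) \<and>
     bimod (addA E) (mulA E) (oneA E) (add2 E) (lmul2 E) (rmul2 E) \<and>
     \<comment> \<open>product of degree 1 forms: biadditive, associative with the degree 0 actions\<close>
     (\<forall>w x y. wedge E (add1 E w x) y = add2 E (wedge E w y) (wedge E x y)) \<and>
     (\<forall>w x y. wedge E w (add1 E x y) = add2 E (wedge E w x) (wedge E w y)) \<and>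
     (\<forall>a w x. wedge E (rmul1 E w a) x = wedge E w (lmul1 E a x)) \<and>
     (\<forall>a w x. lmul2 E a (wedge E w x) = wedge E (lmul1 E a w) x) \<and>
     (\<forall>a w x. rmul2 E (wedge E w x) a = wedge E w (rmul1 E x a)) \<and>
     \<comment> \<open>differential\<close>
     (\<forall>a b. d0 E (addA E a b) = add1 E (d0 E a) (d0 E b)) \<and>
     (\<forall>a b. d0 E (mulA E a b) = add1 E (rmul1 E (d0 E a) b) (lmul1 E a (d0 E b))) \<and>
     (\<forall>w x. d1 E (add1 E w x) = add2 E (d1 E w) (d1 E x)) \<and>
     (\<forall>a w. d1 E (lmul1 E a w) = add2 E (wedge E (d0 E a) w) (lmul2 E a (d1 E w))) \<and>
     (\<forall>a w. d1 E (rmul1 E w a) = add2 E (rmul2 E (d1 E w) a) (wedge E w (d0 E a))) \<and>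
     (\<forall>a. d1 E (d0 E a) = zero2 E) \<and>
     \<comment> \<open>generated by A and dA\<close>
     (\<forall>w. gen1 E w) \<and> (\<forall>w. gen2 E w)"

definition dga2_map ::
  "('a, 'b, 'c, 'z) ext2_scheme \<Rightarrow> ('a2, 'b2, 'c2, 'z2) ext2_scheme \<Rightarrow>
   ('a \<Rightarrow> 'a2) \<Rightarrow> ('b \<Rightarrow> 'b2) \<Rightarrow> ('c \<Rightarrow> 'c2) \<Rightarrow> bool" where
  "dga2_map E F f0 f1 f2 \<longleftrightarrow>
     (\<forall>a b. f0 (addA E a b) = addA F (f0 a) (f0 b)) \<and>
     (\<forall>w x. f1 (add1 E w x) = add1 F (f1 w) (f1 x)) \<and>
     (\<forall>w x. f2 (add2 E w x) = add2 F (f2 w) (f2 x)) \<and>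
     (\<forall>a b. f0 (mulA E a b) = mulA F (f0 a) (f0 b)) \<and>
     (\<forall>a w. f1 (lmul1 E a w) = lmul1 F (f0 a) (f1 w)) \<and>
     (\<forall>a w. f1 (rmul1 E w a) = rmul1 F (f1 w) (f0 a)) \<and>
     (\<forall>a w. f2 (lmul2 E a w) = lmul2 F (f0 a) (f2 w)) \<and>
     (\<forall>a w. f2 (rmul2 E w a) = rmul2 F (f2 w) (f0 a)) \<and>
     (\<forall>w x. f2 (wedge E w x) = wedge F (f1 w) (f1 x)) \<and>
     (\<forall>a. f1 (d0 E a) = d0 F (f0 a)) \<and>
     (\<forall>w. f2 (d1 E w) = d1 F (f1 w))"

definition bar_ext :: "('a, 'b, 'c, 'z) ext2_scheme \<Rightarrow> 'b \<Rightarrow> ('a, 'b, 'c) ext2" where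
  "bar_ext E \<theta> = (let \<theta>2 = wedge E \<theta> \<theta>; pA = addA E; p1 = add1 E; p2 = add2 E;
       one = oneA E in
    \<lparr> addA = (\<lambda>a b. pA (pA a b) one),
      mulA = (\<lambda>a b. pA (pA (mulA E a b) a) b),
      zeroA = one,
      oneA = zeroA E,
      add1 = (\<lambda>w x. p1 (p1 \<theta> w) x),
      zero1 = \<theta>,
      lmul1 = (\<lambda>a w. p1 (lmul1 E a \<theta>) (lmul1 E (pA a one) w)),
      rmul1 = (\<lambda>w a. p1 (rmul1 E \<theta> a) (rmul1 E w (pA a one))),
      add2 = (\<lambda>w x. p2 (p2 \<theta>2 w) x),
      zero2 = \<theta>2,
      lmul2 = (\<lambda>a w. p2 (lmul2 E a \<theta>2) (lmul2 E (pA a one) w)),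
      rmul2 = (\<lambda>w a. p2 (rmul2 E \<theta>2 a) (rmul2 E w (pA a one))),
      wedge = (\<lambda>w x. p2 (p2 (wedge E w x) (wedge E \<theta> x)) (wedge E w \<theta>)),
      d0 = (\<lambda>a. p1 \<theta> (d0 E a)),
      d1 = (\<lambda>w. p2 \<theta>2 (d1 E w)) \<rparr>)"

end

theory Submission
  imports Defs
begin

lemma f2_facts:
  assumes "f2_space add z"
  shows "add (add x y) w = add x (add y w)" "add x y = add y x"
    "add x (add y w) = add y (add x w)" "add x x = z" "add x (add x y) = y"
    "add x z = x" "add z x = x"
proof -
  have A: "\<And>x y w. add (add x y) w = add x (add y w)" and C: "\<And>x y. add x y = add y x"
    and Z: "\<And>x. add x z = x" and N: "\<And>x. add x x = z"
    using assms unfolding f2_space_def by auto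
  show "add (add x y) w = add x (add y w)" by (rule A)
  show "add x y = add y x" by (rule C)
  show "add x (add y w) = add y (add x w)" by (metis A C)
  show "add x x = z" by (rule N)
  show "add x (add x y) = y" by (metis A N C Z)
  show "add x z = x" by (rule Z)
  show "add z x = x" by (metis C Z)
qed

lemma transport:
  fixes E :: "('a, 'b, 'c, 'z) ext2_scheme" and F :: "('a2, 'b2, 'c2, 'z2) ext2_scheme"
  assumes E: "ext_alg2 E"
    and i0: "\<And>x. ga (f0 x) = x" "\<And>x. f0 (ga x) = x"
    and i1: "\<And>x. gb (f1 x) = x" "\<And>x. f1 (gb x) = x"
    and i2: "\<And>x. gc (f2 x) = x" "\<And>x. f2 (gc x) = x"
    and h: "\<And>a b. addA F a b = f0 (addA E (ga a) (ga b))"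
      "\<And>a b. mulA F a b = f0 (mulA E (ga a) (ga b))"
      "zeroA F = f0 (zeroA E)" "oneA F = f0 (oneA E)"
      "\<And>a b. add1 F a b = f1 (add1 E (gb a) (gb b))"
      "zero1 F = f1 (zero1 E)"
      "\<And>a b. lmul1 F a b = f1 (lmul1 E (ga a) (gb b))"
      "\<And>a b. rmul1 F b a = f1 (rmul1 E (gb b) (ga a))"
      "\<And>a b. add2 F a b = f2 (add2 E (gc a) (gc b))"
      "zero2 F = f2 (zero2 E)"
      "\<And>a b. lmul2 F a b = f2 (lmul2 E (ga a) (gc b))"
      "\<And>a b. rmul2 F b a = f2 (rmul2 E (gc b) (ga a))"
      "\<And>a b. wedge F a b = f2 (wedge E (gb a) (gb b))"
      "\<And>a. d0 F a = f1 (d0 E (ga a))"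
      "\<And>a. d1 F a = f2 (d1 E (gb a))"
  shows "ext_alg2 F \<and> dga2_map E F f0 f1 f2"
proof
  show "dga2_map E F f0 f1 f2"
    unfolding dga2_map_def by (simp add: h i0 i1 i2)
next
  have gb: "gen1 F w" for w
  proof -
    obtain xs where xs: "gb w = foldr (\<lambda>(a, b) acc. add1 E (lmul1 E a (d0 E b)) acc) xs (zero1 E)"
    proof -
      have "gen1 E (gb w)" using E unfolding ext_alg2_def by blast
      then show ?thesis using that unfolding gen1_def by blast
    qed
    have "f1 (foldr (\<lambda>(a, b) acc. add1 E (lmul1 E a (d0 E b)) acc) ys (zero1 E)) =
       foldr (\<lambda>(a, b) acc. add1 F (lmul1 F a (d0 F b)) acc) (map (\<lambda>(a,b). (f0 a, f0 b)) ys) (zero1 F)" for ys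
    proof (induction ys)
      case Nil then show ?case by (simp add: h i1)
    next
      case (Cons p ys) then show ?case
        by (cases p) (simp only: list.map foldr.simps o_apply prod.case Cons.IH[symmetric], simp add: h i0 i1 i2)
    qed
    then show ?thesis unfolding gen1_def using xs i1 by metis
  qed
  have gc: "gen2 F w" for w
  proof -
    obtain xs where xs: "gc w = foldr (\<lambda>(a, b, c) acc.
       add2 E (lmul2 E a (wedge E (d0 E b) (d0 E c))) acc) xs (zero2 E)"
    proof -
      have "gen2 E (gc w)" using E unfolding ext_alg2_def by blast
      then show ?thesis using that unfolding gen2_def by blast
    qed
    have "f2 (foldr (\<lambda>(a, b, c) acc.
       add2 E (lmul2 E a (wedge E (d0 E b) (d0 E c))) acc) ys (zero2 E)) =
       foldr (\<lambda>(a, b, c) acc.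
       add2 F (lmul2 F a (wedge F (d0 F b) (d0 F c))) acc) (map (\<lambda>(a,b,c). (f0 a, f0 b, f0 c)) ys) (zero2 F)" for ys
    proof (induction ys)
      case Nil then show ?case by (simp add: h i2)
    next
      case (Cons p ys) then show ?case
        by (cases p) (simp only: list.map foldr.simps o_apply prod.case Cons.IH[symmetric], simp add: h i0 i1 i2)
    qed
    then show ?thesis unfolding gen2_def using xs i2 by metis
  qed
  have z0: "addA E (zeroA E) x = x" "add1 E (zero1 E) y = y" "add2 E (zero2 E) u = u" for x y u
    using E f2_facts(7) unfolding ext_alg2_def by metis+
  show "ext_alg2 F"
    using E gb gc unfolding ext_alg2_def f2_space_def bimod_def
    apply (elim conjE)
    apply (intro conjI allI)
    apply (simp_all only: h i0 i1 i2)
    apply (simp_all add: z0 i0 i1 i2)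
    done
qed

theorem lemma5p4:
  fixes E :: "('a, 'b, 'c) ext2" and \<theta> :: 'b
  assumes "ext_alg2 E"
    and "d1 E \<theta> = zero2 E"
  shows "ext_alg2 (bar_ext E \<theta>) \<and>
         dga2_map E (bar_ext E \<theta>)
           (\<lambda>a. addA E (oneA E) a)
           (\<lambda>w. add1 E \<theta> w)
           (\<lambda>w. add2 E (wedge E \<theta> \<theta>) w)"
proof -
  have E: "ext_alg2 E" by fact
  have sA: "f2_space (addA E) (zeroA E)" and s1: "f2_space (add1 E) (zero1 E)"
    and s2: "f2_space (add2 E) (zero2 E)"
    and b1: "bimod (addA E) (mulA E) (oneA E) (add1 E) (lmul1 E) (rmul1 E)"
    and b2: "bimod (addA E) (mulA E) (oneA E) (add2 E) (lmul2 E) (rmul2 E)"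
    using E unfolding ext_alg2_def by auto
  note fA = f2_facts[OF sA] and f1 = f2_facts[OF s1] and f2 = f2_facts[OF s2]
  have m: "\<And>a. mulA E (oneA E) a = a" "\<And>a. mulA E a (oneA E) = a"
    "\<And>a b c. mulA E a (addA E b c) = addA E (mulA E a b) (mulA E a c)"
    "\<And>a b c. mulA E (addA E a b) c = addA E (mulA E a c) (mulA E b c)"
    using E unfolding ext_alg2_def by auto
  have bm1: "\<And>a x y. lmul1 E a (add1 E x y) = add1 E (lmul1 E a x) (lmul1 E a y)"
     "\<And>a b x. lmul1 E (addA E a b) x = add1 E (lmul1 E a x) (lmul1 E b x)"
     "\<And>x. lmul1 E (oneA E) x = x"
     "\<And>a x y. rmul1 E (add1 E x y) a = add1 E (rmul1 E x a) (rmul1 E y a)"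
     "\<And>a b x. rmul1 E x (addA E a b) = add1 E (rmul1 E x a) (rmul1 E x b)"
     "\<And>x. rmul1 E x (oneA E) = x"
    using b1 unfolding bimod_def by auto
  have bm2: "\<And>a x y. lmul2 E a (add2 E x y) = add2 E (lmul2 E a x) (lmul2 E a y)"
     "\<And>a b x. lmul2 E (addA E a b) x = add2 E (lmul2 E a x) (lmul2 E b x)"
     "\<And>x. lmul2 E (oneA E) x = x"
     "\<And>a x y. rmul2 E (add2 E x y) a = add2 E (rmul2 E x a) (rmul2 E y a)"
     "\<And>a b x. rmul2 E x (addA E a b) = add2 E (rmul2 E x a) (rmul2 E x b)"
     "\<And>x. rmul2 E x (oneA E) = x"
    using b2 unfolding bimod_def by auto
  have w: "\<And>w x y. wedge E (add1 E w x) y = add2 E (wedge E w y) (wedge E x y)"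
    "\<And>w x y. wedge E w (add1 E x y) = add2 E (wedge E w x) (wedge E w y)"
    using E unfolding ext_alg2_def by auto
  have dd: "\<And>a b. d0 E (addA E a b) = add1 E (d0 E a) (d0 E b)"
    "\<And>a b. d0 E (mulA E a b) = add1 E (rmul1 E (d0 E a) b) (lmul1 E a (d0 E b))"
    "\<And>w x. d1 E (add1 E w x) = add2 E (d1 E w) (d1 E x)"
    using E unfolding ext_alg2_def by auto
  have d01: "d0 E (oneA E) = zero1 E"
  proof -
    have "d0 E (oneA E) = d0 E (mulA E (oneA E) (oneA E))" using m by simp
    also have "\<dots> = add1 E (d0 E (oneA E)) (d0 E (oneA E))" using dd(2) bm1 by simp
    finally show ?thesis using f1(4) by simp
  qed
  note R = fA(1,2,3,4,5,6,7) f1(1,2,3,4,5,6,7) f2(1,2,3,4,5,6,7) m bm1 bm2 w dd d01 assms(2)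
  show ?thesis
    apply (rule transport[OF E, where ga="\<lambda>a. addA E (oneA E) a" and gb="\<lambda>w. add1 E \<theta> w"
        and gc="\<lambda>w. add2 E (wedge E \<theta> \<theta>) w"])
    apply (simp_all add: bar_ext_def Let_def R)
    done
qed

end
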